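(* Let $\nu>0$, $Q\sim\chi^2_\nu$, $\theta_1\in\mathbb{R}$, $\theta_2>0$, $\theta_3>0$, and $Y=\theta_1-\theta_2\log(Q)+\theta_3Q$. Then the moment generating function $E(e^{tY})$ is finite for $t<\frac12\min(\nu/\theta_2,1/\theta_3)$, and the cumulants $\kappa_j$ of $Y$ are $$\kappa_1=\theta_1-\theta_2\log 2+\nu\theta_3-\theta_2\psi^{(0)}\!\left(\tfrac{\nu}{2}\right),$$ $$\kappa_j=2^{j-1}\Gamma(j-1)\,\theta_3^{j-1}\big(-j\theta_2+(j-1)\nu\theta_3\big)+(-1)^j\theta_2^j\,\psi^{(j-1)}\!\left(\tfrac{\nu}{2}\right),\qquad j=2,3,\dots$$ In particular, the mean is $\kappa_1$, the variance is $2\theta_3(-2\theta_2+\nu\theta_3)+\theta_2^2\psi^{(1)}(\nu/2)$, the skewness $\kappa_3/\kappa_2^{3/2}$ has numerator $4\theta_3^2(-3\theta_2+2\nu\theta_3)-\theta_2^3\psi^{(2)}(\nu/2)$, and $\kappa_4/\kappa_2^2$ has numerator $16\theta_3^3(-4\theta_2+3\nu\theta_3)+\theta_2^4\psi^{(3)}(\nu/2)$.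
   Context: $\chi^2_\nu$ denotes the chi-squared distribution with $\nu$ degrees of freedom. $\psi^{(m)}$ is the polygamma function of order $m$, i.e. the $(m+1)$-th derivative of $\log\Gamma$; $\psi^{(0)}$ is the digamma function. *)

theory Defs
  imports "HOL-Probability.Probability"
begin

definition chi2_density :: "real \<Rightarrow> real \<Rightarrow> real" where
  "chi2_density \<nu> q =
     (if q > 0 then q powr (\<nu> / 2 - 1) * exp (- q / 2) / (2 powr (\<nu> / 2) * Gamma (\<nu> / 2))
      else 0)"

definition mgf :: "'a measure \<Rightarrow> ('a \<Rightarrow> real) \<Rightarrow> real \<Rightarrow> real" where
  "mgf M Y t = (\<integral>\<omega>. exp (t * Y \<omega>) \<partial>M)"

definition cgf :: "'a measure \<Rightarrow> ('a \<Rightarrow> real) \<Rightarrow> real \<Rightarrow> real" where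
  "cgf M Y t = ln (mgf M Y t)"

definition cumulant :: "'a measure \<Rightarrow> ('a \<Rightarrow> real) \<Rightarrow> nat \<Rightarrow> real" where
  "cumulant M Y j = (deriv ^^ j) (cgf M Y) 0"

end

theory Submission imports Defs begin

lemma gamma_nn:
  fixes s b :: real assumes s: "s > 0" and b: "b > 0"
  shows "(\<integral>\<^sup>+q. ennreal (indicator {0..} q * q powr (s - 1) * exp (- b * q)) \<partial>lborel)
          = ennreal (Gamma s / b powr s)"
proof -
  let ?g = "\<lambda>t. ennreal (indicator {0..} t * t powr (s - 1) / exp t)"
  have "ennreal (Gamma s) = (\<integral>\<^sup>+t. ?g t \<partial>lborel)"
    using Gamma_conv_nn_integral_real[OF s] by simp
  also have "\<dots> = ennreal \<bar>b\<bar> * (\<integral>\<^sup>+x. ?g (0 + b * x) \<partial>lborel)"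
    by (rule nn_integral_real_affine) (use b in auto)
  also have "(\<lambda>x. ?g (0 + b * x)) = (\<lambda>x. ennreal (b powr (s - 1)) * ennreal (indicator {0..} x * x powr (s - 1) * exp (- b * x)))"
  proof
    fix x
    show "?g (0 + b * x) = ennreal (b powr (s - 1)) * ennreal (indicator {0..} x * x powr (s - 1) * exp (- b * x))"
      using b by (auto simp: indicator_def ennreal_mult'[symmetric] powr_mult exp_minus field_simps zero_le_mult_iff)
  qed
  also have "(\<integral>\<^sup>+x. ennreal (b powr (s - 1)) * ennreal (indicator {0..} x * x powr (s - 1) * exp (- b * x)) \<partial>lborel)
     = ennreal (b powr (s - 1)) * (\<integral>\<^sup>+x. ennreal (indicator {0..} x * x powr (s - 1) * exp (- b * x)) \<partial>lborel)"
    by (rule nn_integral_cmult) auto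
  finally have eq: "ennreal (Gamma s) = ennreal (b * b powr (s - 1)) * (\<integral>\<^sup>+x. ennreal (indicator {0..} x * x powr (s - 1) * exp (- b * x)) \<partial>lborel)"
    using b by (simp add: ennreal_mult mult.assoc)
  have bs: "b * b powr (s - 1) = b powr s" using b by (simp add: powr_diff)
  have pos: "b powr s > 0" using b by simp
  have "ennreal (Gamma s / b powr s) = ennreal (1 / b powr s) * ennreal (Gamma s)"
    using pos s by (subst ennreal_mult[symmetric]) auto
  also have "\<dots> = (ennreal (1 / b powr s) * ennreal (b powr s)) * (\<integral>\<^sup>+x. ennreal (indicator {0..} x * x powr (s - 1) * exp (- b * x)) \<partial>lborel)"
    by (subst eq) (simp add: bs mult.assoc)
  also have "ennreal (1 / b powr s) * ennreal (b powr s) = 1"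
    using pos by (simp add: ennreal_mult[symmetric])
  finally show ?thesis by simp
qed

lemma gamma_bochner:
  fixes s b :: real assumes s: "s > 0" and b: "b > 0"
  shows "has_bochner_integral lborel (\<lambda>q. indicator {0..} q * q powr (s - 1) * exp (- b * q)) (Gamma s / b powr s)"
  by (rule has_bochner_integral_nn_integral) (use s b gamma_nn[OF s b] in \<open>auto simp: indicator_def\<close>)


lemma abs_exp_sub_one_le: "\<bar>exp x - 1\<bar> \<le> \<bar>x::real\<bar> * exp \<bar>x\<bar>"
proof (cases "x \<ge> 0")
  case True
  have "1 - x \<le> exp (-x)" using exp_ge_add_one_self[of "-x"] by simp
  hence "(1 - x) * exp x \<le> exp (-x) * exp x" by (intro mult_right_mono) auto
  hence "exp x - x * exp x \<le> 1" by (simp add: algebra_simps exp_minus field_simps)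
  thus ?thesis using True by auto
next
  case False
  have "1 + x \<le> exp x" using exp_ge_add_one_self[of x] by simp
  moreover have "-x \<le> -x * exp \<bar>x\<bar>" using False by (simp add: mult_le_cancel_left1)
  moreover have "exp x \<le> 1" using False by simp
  ultimately have "1 - exp x \<le> -x * exp \<bar>x\<bar>" by linarith
  thus ?thesis using False \<open>exp x \<le> 1\<close> by (simp add: abs_if)
qed

lemma exp_dq_bound:
  fixes h y :: real assumes "h \<noteq> 0"
  shows "\<bar>(exp (h * y) - 1) / h\<bar> \<le> \<bar>y\<bar> * exp (\<bar>h\<bar> * \<bar>y\<bar>)"
proof -
  have "\<bar>exp (h * y) - 1\<bar> \<le> \<bar>h * y\<bar> * exp \<bar>h * y\<bar>" by (rule abs_exp_sub_one_le)
  thus ?thesis using assms by (simp add: abs_mult divide_le_eq field_simps)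
qed

lemma abs_le_exp_div: assumes "(d::real) > 0" shows "\<bar>y\<bar> \<le> exp (d * \<bar>y\<bar>) / d"
proof -
  have "d * \<bar>y\<bar> \<le> exp (d * \<bar>y\<bar>)" using exp_ge_add_one_self[of "d*\<bar>y\<bar>"] by linarith
  thus ?thesis using assms by (simp add: field_simps)
qed

lemma pow_exp_bound:
  fixes y d :: real assumes d: "d > 0" and k: "k \<le> 2"
  shows "\<bar>y\<bar> ^ k * exp (d * \<bar>y\<bar>) \<le> exp (3 * d * \<bar>y\<bar>) / d ^ k"
proof -
  have "\<bar>y\<bar> ^ k \<le> (exp (d * \<bar>y\<bar>) / d) ^ k"
    by (rule power_mono[OF abs_le_exp_div[OF d]]) simp
  also have "\<dots> = exp (real k * d * \<bar>y\<bar>) / d ^ k"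
    by (simp add: power_divide exp_of_nat_mult[symmetric] mult.assoc)
  finally have "\<bar>y\<bar> ^ k * exp (d * \<bar>y\<bar>) \<le> exp (real k * d * \<bar>y\<bar>) / d ^ k * exp (d * \<bar>y\<bar>)"
    by (intro mult_right_mono) auto
  also have "\<dots> = exp ((real k + 1) * d * \<bar>y\<bar>) / d ^ k"
    by (simp add: exp_add[symmetric] algebra_simps)
  also have "\<dots> \<le> exp (3 * d * \<bar>y\<bar>) / d ^ k"
    using k d by (intro divide_right_mono) (auto intro!: mult_right_mono)
  finally show ?thesis .
qed

lemma exp_two_sided:
  fixes t y a :: real
  shows "exp (t * y) * exp (a * \<bar>y\<bar>) \<le> exp ((t + a) * y) + exp ((t - a) * y)"
proof (cases "y \<ge> 0")
  case True
  hence "exp (t * y) * exp (a * \<bar>y\<bar>) = exp ((t + a) * y)" by (simp add: exp_add[symmetric] algebra_simps)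
  thus ?thesis by (simp add: add_increasing2)
next
  case False
  hence "exp (t * y) * exp (a * \<bar>y\<bar>) = exp ((t - a) * y)" by (simp add: exp_add[symmetric] algebra_simps)
  thus ?thesis by (simp add: add_increasing)
qed

lemma pointwise_bound:
  fixes y s t d :: real assumes d: "d > 0" and k: "k \<le> 2" and st: "\<bar>s - t\<bar> \<le> d"
  shows "\<bar>y ^ k * exp (s * y)\<bar> \<le> (exp ((t + 3 * d) * y) + exp ((t - 3 * d) * y)) / d ^ k"
proof -
  have "exp (s * y) = exp (t * y) * exp ((s - t) * y)" by (simp add: exp_add[symmetric] algebra_simps)
  also have "\<dots> \<le> exp (t * y) * exp (d * \<bar>y\<bar>)"
  proof -
    have "(s - t) * y \<le> d * \<bar>y\<bar>"
      using st by (metis abs_ge_self abs_mult abs_mult_pos dual_order.trans mult_right_mono abs_ge_zero)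
    thus ?thesis by simp
  qed
  finally have e: "exp (s * y) \<le> exp (t * y) * exp (d * \<bar>y\<bar>)" .
  have "\<bar>y ^ k * exp (s * y)\<bar> = \<bar>y\<bar> ^ k * exp (s * y)" by (simp add: abs_mult power_abs)
  also have "\<dots> \<le> \<bar>y\<bar> ^ k * (exp (t * y) * exp (d * \<bar>y\<bar>))"
    by (intro mult_left_mono e) auto
  also have "\<dots> = exp (t * y) * (\<bar>y\<bar> ^ k * exp (d * \<bar>y\<bar>))" by simp
  also have "\<dots> \<le> exp (t * y) * (exp (3 * d * \<bar>y\<bar>) / d ^ k)"
    by (intro mult_left_mono pow_exp_bound d k) auto
  also have "\<dots> = exp (t * y) * exp ((3 * d) * \<bar>y\<bar>) / d ^ k" by simp
  also have "\<dots> \<le> (exp ((t + 3 * d) * y) + exp ((t - 3 * d) * y)) / d ^ k"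
    using d by (intro divide_right_mono exp_two_sided) auto
  finally show ?thesis .
qed

lemma integ_pow_exp:
  fixes Y :: "'a \<Rightarrow> real"
  assumes [measurable]: "Y \<in> borel_measurable M" and d: "d > 0" and k: "k \<le> 2" and st: "\<bar>s - t\<bar> \<le> d"
    and i1: "integrable M (\<lambda>\<omega>. exp ((t + 3 * d) * Y \<omega>))"
    and i2: "integrable M (\<lambda>\<omega>. exp ((t - 3 * d) * Y \<omega>))"
  shows "integrable M (\<lambda>\<omega>. Y \<omega> ^ k * exp (s * Y \<omega>))"
proof (rule Bochner_Integration.integrable_bound)
  show "integrable M (\<lambda>\<omega>. (exp ((t + 3 * d) * Y \<omega>) + exp ((t - 3 * d) * Y \<omega>)) / d ^ k)"
    using i1 i2 by auto
  show "(\<lambda>\<omega>. Y \<omega> ^ k * exp (s * Y \<omega>)) \<in> borel_measurable M" by measurable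
  show "AE \<omega> in M. norm (Y \<omega> ^ k * exp (s * Y \<omega>)) \<le> norm ((exp ((t + 3 * d) * Y \<omega>) + exp ((t - 3 * d) * Y \<omega>)) / d ^ k)"
    using pointwise_bound[OF d k st] d by (auto intro: order.trans[OF _ abs_ge_self])
qed

lemma dq_lim:
  fixes Y :: "'a \<Rightarrow> real"
  assumes [measurable]: "Y \<in> borel_measurable M" and d: "d > 0" and k: "k \<le> 1"
    and i1: "integrable M (\<lambda>\<omega>. exp ((t + 3 * d) * Y \<omega>))"
    and i2: "integrable M (\<lambda>\<omega>. exp ((t - 3 * d) * Y \<omega>))"
  shows "(\<lambda>n. ((\<integral>\<omega>. Y \<omega> ^ k * exp ((t + d / (real n + 1)) * Y \<omega>) \<partial>M)
                 - (\<integral>\<omega>. Y \<omega> ^ k * exp (t * Y \<omega>) \<partial>M)) / (d / (real n + 1)))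
          \<longlonglongrightarrow> (\<integral>\<omega>. Y \<omega> ^ Suc k * exp (t * Y \<omega>) \<partial>M)"
proof -
  define h where "h = (\<lambda>n::nat. d / (real n + 1))"
  have hpos: "h n > 0" for n using d by (simp add: h_def)
  have hle: "h n \<le> d" for n using d by (simp add: h_def field_simps)
  have h0: "h \<longlonglongrightarrow> 0" unfolding h_def
    using tendsto_mult[OF tendsto_const[of d] LIMSEQ_inverse_real_of_nat] by (simp add: divide_inverse add.commute)
  have tl: "(\<lambda>n. t + h n) \<longlonglongrightarrow> t" using tendsto_add[OF tendsto_const h0, of t] by simp
  have seq: "filterlim (\<lambda>n. t + h n) (at t) sequentially"
    using tl hpos by (auto simp: filterlim_at intro!: always_eventually) (metis less_irrefl)
  have int_at: "integrable M (\<lambda>\<omega>. Y \<omega> ^ k * exp (s * Y \<omega>))" if "\<bar>s - t\<bar> \<le> d" for s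
    using integ_pow_exp[OF _ d _ that i1 i2] k by auto
  have eq: "((\<integral>\<omega>. Y \<omega> ^ k * exp ((t + h n) * Y \<omega>) \<partial>M) - (\<integral>\<omega>. Y \<omega> ^ k * exp (t * Y \<omega>) \<partial>M)) / h n
      = (\<integral>\<omega>. Y \<omega> ^ k * ((exp ((t + h n) * Y \<omega>) - exp (t * Y \<omega>)) / h n) \<partial>M)" for n
  proof -
    have "((\<integral>\<omega>. Y \<omega> ^ k * exp ((t + h n) * Y \<omega>) \<partial>M) - (\<integral>\<omega>. Y \<omega> ^ k * exp (t * Y \<omega>) \<partial>M))
        = (\<integral>\<omega>. Y \<omega> ^ k * exp ((t + h n) * Y \<omega>) - Y \<omega> ^ k * exp (t * Y \<omega>) \<partial>M)"
      using hle[of n] hpos[of n] d by (intro Bochner_Integration.integral_diff[symmetric] int_at) auto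
    also have "\<dots> / h n = (\<integral>\<omega>. (Y \<omega> ^ k * exp ((t + h n) * Y \<omega>) - Y \<omega> ^ k * exp (t * Y \<omega>)) / h n \<partial>M)"
      by simp
    also have "\<dots> = (\<integral>\<omega>. Y \<omega> ^ k * ((exp ((t + h n) * Y \<omega>) - exp (t * Y \<omega>)) / h n) \<partial>M)"
      by (simp add: algebra_simps diff_divide_distrib)
    finally show ?thesis .
  qed
  have "(\<lambda>n. \<integral>\<omega>. Y \<omega> ^ k * ((exp ((t + h n) * Y \<omega>) - exp (t * Y \<omega>)) / h n) \<partial>M)
          \<longlonglongrightarrow> (\<integral>\<omega>. Y \<omega> ^ Suc k * exp (t * Y \<omega>) \<partial>M)"
  proof (rule integral_dominated_convergence)
    show "(\<lambda>\<omega>. Y \<omega> ^ Suc k * exp (t * Y \<omega>)) \<in> borel_measurable M" by measurable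
    show "(\<lambda>\<omega>. Y \<omega> ^ k * ((exp ((t + h n) * Y \<omega>) - exp (t * Y \<omega>)) / h n)) \<in> borel_measurable M" for n
      by measurable
    show "integrable M (\<lambda>\<omega>. (exp ((t + 3 * d) * Y \<omega>) + exp ((t - 3 * d) * Y \<omega>)) / d ^ Suc k)"
      using i1 i2 by auto
    show "AE \<omega> in M. (\<lambda>n. Y \<omega> ^ k * ((exp ((t + h n) * Y \<omega>) - exp (t * Y \<omega>)) / h n))
            \<longlonglongrightarrow> Y \<omega> ^ Suc k * exp (t * Y \<omega>)"
    proof (intro AE_I2)
      fix \<omega> define y where "y = Y \<omega>"
      have "((\<lambda>s. exp (s * y)) has_field_derivative y * exp (t * y)) (at t)"
        by (auto intro!: derivative_eq_intros)
      hence "((\<lambda>s. (exp (s * y) - exp (t * y)) / (s - t)) \<longlongrightarrow> y * exp (t * y)) (at t)"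
        by (simp add: has_field_derivative_iff)
      from filterlim_compose[OF this seq]
      have "(\<lambda>n. (exp ((t + h n) * y) - exp (t * y)) / h n) \<longlonglongrightarrow> y * exp (t * y)" by simp
      from tendsto_mult_left[OF this, of "y ^ k"]
      show "(\<lambda>n. Y \<omega> ^ k * ((exp ((t + h n) * Y \<omega>) - exp (t * Y \<omega>)) / h n)) \<longlonglongrightarrow> Y \<omega> ^ Suc k * exp (t * Y \<omega>)"
        by (simp add: y_def mult.assoc mult.left_commute)
    qed
    show "AE \<omega> in M. norm (Y \<omega> ^ k * ((exp ((t + h n) * Y \<omega>) - exp (t * Y \<omega>)) / h n))
            \<le> (exp ((t + 3 * d) * Y \<omega>) + exp ((t - 3 * d) * Y \<omega>)) / d ^ Suc k" for n
    proof (intro AE_I2)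
      fix \<omega> define y where "y = Y \<omega>"
      have hn: "h n \<noteq> 0" using hpos[of n] by simp
      have "exp ((t + h n) * y) - exp (t * y) = exp (t * y) * (exp (h n * y) - 1)"
        by (simp add: exp_add[symmetric] algebra_simps)
      hence "\<bar>y ^ k * ((exp ((t + h n) * y) - exp (t * y)) / h n)\<bar>
             = \<bar>y\<bar> ^ k * exp (t * y) * \<bar>(exp (h n * y) - 1) / h n\<bar>"
        by (simp add: abs_mult power_abs)
      also have "\<dots> \<le> \<bar>y\<bar> ^ k * exp (t * y) * (\<bar>y\<bar> * exp (\<bar>h n\<bar> * \<bar>y\<bar>))"
        by (intro mult_left_mono exp_dq_bound hn) auto
      also have "\<dots> \<le> \<bar>y\<bar> ^ k * exp (t * y) * (\<bar>y\<bar> * exp (d * \<bar>y\<bar>))"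
        using hle[of n] hpos[of n] by (intro mult_left_mono) (auto intro!: mult_right_mono)
      also have "\<dots> = exp (t * y) * (\<bar>y\<bar> ^ Suc k * exp (d * \<bar>y\<bar>))" by (simp add: algebra_simps)
      also have "\<dots> \<le> exp (t * y) * (exp (3 * d * \<bar>y\<bar>) / d ^ Suc k)"
        using k by (intro mult_left_mono pow_exp_bound d) auto
      also have "\<dots> = exp (t * y) * exp ((3 * d) * \<bar>y\<bar>) / d ^ Suc k" by simp
      also have "\<dots> \<le> (exp ((t + 3 * d) * y) + exp ((t - 3 * d) * y)) / d ^ Suc k"
        using d by (intro divide_right_mono exp_two_sided) auto
      finally show "norm (Y \<omega> ^ k * ((exp ((t + h n) * Y \<omega>) - exp (t * Y \<omega>)) / h n))
            \<le> (exp ((t + 3 * d) * Y \<omega>) + exp ((t - 3 * d) * Y \<omega>)) / d ^ Suc k"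
        by (simp add: y_def)
    qed
  qed
  hence "(\<lambda>n. ((\<integral>\<omega>. Y \<omega> ^ k * exp ((t + h n) * Y \<omega>) \<partial>M) - (\<integral>\<omega>. Y \<omega> ^ k * exp (t * Y \<omega>) \<partial>M)) / h n)
          \<longlonglongrightarrow> (\<integral>\<omega>. Y \<omega> ^ Suc k * exp (t * Y \<omega>) \<partial>M)"
    by (simp only: eq)
  thus ?thesis by (simp only: h_def)
qed


lemma alg:
  fixes x a :: real assumes x: "x \<noteq> 0"
  shows "- fact m * a ^ Suc m * - ((1 + real m) * (- a * x ^ m) * inverse ((x ^ Suc m) ^ Suc (Suc 0)))
        = - fact (Suc m) * a ^ Suc (Suc m) / x ^ Suc (Suc m)"
proof -
  have "(x ^ Suc m) ^ Suc (Suc 0) = x ^ m * x ^ Suc (Suc m)" by (simp add: power_Suc power_add[symmetric] power_mult_distrib[symmetric] algebra_simps power2_eq_square[symmetric] power_mult[symmetric])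
  hence "inverse ((x ^ Suc m) ^ Suc (Suc 0)) = inverse (x ^ m) * inverse (x ^ Suc (Suc m))" by (simp add: inverse_mult_distrib)
  hence "- fact m * a ^ Suc m * - ((1 + real m) * (- a * x ^ m) * inverse ((x ^ Suc m) ^ Suc (Suc 0)))
     = - fact m * a ^ Suc m * ((1 + real m) * a) * (x ^ m * inverse (x ^ m)) * inverse (x ^ Suc (Suc m))"
    by (simp add: algebra_simps)
  also have "x ^ m * inverse (x ^ m) = 1" using x by simp
  finally show ?thesis by (simp add: divide_inverse algebra_simps)
qed

definition Lf :: "real \<Rightarrow> nat \<Rightarrow> real \<Rightarrow> real" where
  "Lf a k t = (if k = 0 then ln (1 - a * t) else - (fact (k - 1)) * a ^ k / (1 - a * t) ^ k)"

lemma Lf_deriv: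
  assumes "1 - a * t > 0"
  shows "(Lf a k has_real_derivative Lf a (Suc k) t) (at t)"
proof (cases k)
  case 0
  have e: "Lf a k = (\<lambda>t. ln (1 - a * t))" using 0 by (simp add: Lf_def fun_eq_iff)
  show ?thesis unfolding e using assms 0
    by (auto intro!: derivative_eq_intros simp: Lf_def field_simps)
next
  case (Suc m)
  have e: "Lf a k = (\<lambda>t. - (fact m) * a ^ Suc m * inverse ((1 - a * t) ^ Suc m))" using Suc by (simp add: Lf_def fun_eq_iff divide_inverse)
  have d0: "((\<lambda>t. 1 - a * t) has_real_derivative - a) (at t)" by (auto intro!: derivative_eq_intros)
  have nz: "(1 - a * t) ^ Suc m \<noteq> 0" using assms by simp
  from DERIV_cmult[OF DERIV_inverse_fun[OF DERIV_power_Suc[OF d0, of m] nz], of "- (fact m) * a ^ Suc m"]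
  show ?thesis unfolding e
  proof (rule DERIV_cong)
    have nz': "1 - a * t \<noteq> 0" using assms by simp
    show "- fact m * a ^ Suc m * - ((1 + real m) * (- a * (1 - a * t) ^ m) * inverse (((1 - a * t) ^ Suc m) ^ Suc (Suc 0)))
        = Lf a (Suc k) t"
      using Suc alg[OF nz'] by (simp add: Lf_def)
  qed
qed


definition Kd :: "real \<Rightarrow> real \<Rightarrow> real \<Rightarrow> real \<Rightarrow> nat \<Rightarrow> real \<Rightarrow> real" where
  "Kd \<nu> \<theta>1 \<theta>2 \<theta>3 j t =
     (if j = 0 then t * (\<theta>1 - \<theta>2 * ln 2) - ln_Gamma (\<nu> / 2) else if j = 1 then \<theta>1 - \<theta>2 * ln 2 else 0)
   + (- \<theta>2) ^ j * (if j = 0 then ln_Gamma (\<nu> / 2 - t * \<theta>2) else Polygamma (j - 1) (\<nu> / 2 - t * \<theta>2))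
   + (- ((\<nu> / 2 - t * \<theta>2) * Lf (2 * \<theta>3) j t) + real j * \<theta>2 * Lf (2 * \<theta>3) (j - 1) t)"

lemma partA_deriv:
  "((\<lambda>t. (if j = 0 then t * (\<theta>1 - \<theta>2 * ln 2) - ln_Gamma (\<nu> / 2) else if j = 1 then \<theta>1 - \<theta>2 * ln 2 else 0))
     has_real_derivative (if Suc j = 0 then t * (\<theta>1 - \<theta>2 * ln 2) - ln_Gamma (\<nu> / 2) else if Suc j = 1 then \<theta>1 - \<theta>2 * ln 2 else 0)) (at t)"
  by (cases "j = 0") (auto intro!: derivative_eq_intros)

lemma partB_deriv:
  assumes "\<nu> / 2 - t * \<theta>2 > 0"
  shows "((\<lambda>t. (- \<theta>2) ^ j * (if j = 0 then ln_Gamma (\<nu> / 2 - t * \<theta>2) else Polygamma (j - 1) (\<nu> / 2 - t * \<theta>2)))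
     has_real_derivative (- \<theta>2) ^ Suc j * (if Suc j = 0 then ln_Gamma (\<nu> / 2 - t * \<theta>2) else Polygamma (Suc j - 1) (\<nu> / 2 - t * \<theta>2))) (at t)"
proof (cases j)
  case 0
  thus ?thesis using assms by (auto intro!: derivative_eq_intros)
next
  case (Suc m)
  have nz: "\<nu> / 2 - t * \<theta>2 \<notin> \<int>\<^sub>\<le>\<^sub>0" using assms by (auto elim!: nonpos_Ints_cases)
  have "((\<lambda>t. Polygamma m (\<nu> / 2 - t * \<theta>2)) has_real_derivative Polygamma (Suc m) (\<nu> / 2 - t * \<theta>2) * (- \<theta>2)) (at t)"
    by (rule DERIV_chain2[where f="Polygamma m" and g="\<lambda>t. \<nu> / 2 - t * \<theta>2", OF has_field_derivative_Polygamma[OF nz, of m UNIV]])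
       (auto intro!: derivative_eq_intros)
  from DERIV_cmult[OF this, of "(- \<theta>2) ^ j"] show ?thesis using Suc by (simp add: mult_ac)
qed

lemma partC_deriv:
  assumes "1 - 2 * \<theta>3 * t > 0"
  shows "((\<lambda>t. - ((\<nu> / 2 - t * \<theta>2) * Lf (2 * \<theta>3) j t) + real j * \<theta>2 * Lf (2 * \<theta>3) (j - 1) t)
     has_real_derivative (- ((\<nu> / 2 - t * \<theta>2) * Lf (2 * \<theta>3) (Suc j) t) + real (Suc j) * \<theta>2 * Lf (2 * \<theta>3) (Suc j - 1) t)) (at t)"
proof -
  have a: "1 - (2 * \<theta>3) * t > 0" using assms by simp
  note L = Lf_deriv[OF a]
  have u: "((\<lambda>t. \<nu> / 2 - t * \<theta>2) has_real_derivative - \<theta>2) (at t)" by (auto intro!: derivative_eq_intros)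
  note D = DERIV_add[OF DERIV_minus[OF DERIV_mult[OF u L[of j]]] DERIV_cmult[OF L[of "j - 1"], of "real j * \<theta>2"]]
  show ?thesis
    by (rule DERIV_cong[OF D]) (cases j, auto simp: algebra_simps)

qed

lemma Kd_deriv:
  assumes "\<nu> / 2 - t * \<theta>2 > 0" "1 - 2 * \<theta>3 * t > 0"
  shows "(Kd \<nu> \<theta>1 \<theta>2 \<theta>3 j has_real_derivative Kd \<nu> \<theta>1 \<theta>2 \<theta>3 (Suc j) t) (at t)"
proof -
  have e: "Kd \<nu> \<theta>1 \<theta>2 \<theta>3 j = (\<lambda>t. (if j = 0 then t * (\<theta>1 - \<theta>2 * ln 2) - ln_Gamma (\<nu> / 2) else if j = 1 then \<theta>1 - \<theta>2 * ln 2 else 0)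
   + (- \<theta>2) ^ j * (if j = 0 then ln_Gamma (\<nu> / 2 - t * \<theta>2) else Polygamma (j - 1) (\<nu> / 2 - t * \<theta>2))
   + (- ((\<nu> / 2 - t * \<theta>2) * Lf (2 * \<theta>3) j t) + real j * \<theta>2 * Lf (2 * \<theta>3) (j - 1) t))"
    by (simp add: Kd_def fun_eq_iff)
  show ?thesis unfolding e
    using DERIV_add[OF DERIV_add[OF partA_deriv partB_deriv[OF assms(1)]] partC_deriv[OF assms(2)]]
    by (simp add: Kd_def del: of_nat_Suc)
qed


lemma chi2_nonneg: "\<nu> > 0 \<Longrightarrow> chi2_density \<nu> q \<ge> 0"
  by (auto simp: chi2_density_def)

lemma mgf_closed:
  fixes Q :: "'a \<Rightarrow> real"
  assumes D: "distributed M lborel Q (\<lambda>q. ennreal (chi2_density \<nu> q))" and nu: "\<nu> > 0"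
    and sp: "\<nu> / 2 - t * \<theta>2 > 0" and bp: "1 - 2 * \<theta>3 * t > 0"
  shows "integrable M (\<lambda>\<omega>. exp (t * (\<theta>1 - \<theta>2 * ln (Q \<omega>) + \<theta>3 * Q \<omega>)))"
    and "(\<integral>\<omega>. exp (t * (\<theta>1 - \<theta>2 * ln (Q \<omega>) + \<theta>3 * Q \<omega>)) \<partial>M) = exp (Kd \<nu> \<theta>1 \<theta>2 \<theta>3 0 t)"
proof -
  define g where "g = (\<lambda>q::real. exp (t * (\<theta>1 - \<theta>2 * ln q + \<theta>3 * q)))"
  have gm[measurable]: "g \<in> borel_measurable lborel" unfolding g_def by measurable
  define s where "s = \<nu> / 2 - t * \<theta>2"
  define b where "b = 1 / 2 - t * \<theta>3"
  define C where "C = exp (t * \<theta>1) / (2 powr (\<nu> / 2) * Gamma (\<nu> / 2))"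
  have s0: "s > 0" using sp by (simp add: s_def)
  have b0: "b > 0" using bp by (simp add: b_def algebra_simps)
  have G0: "Gamma (\<nu> / 2) > 0" using nu by simp
  have pw: "chi2_density \<nu> q * g q = C * (indicator {0..} q * q powr (s - 1) * exp (- b * q))" for q
  proof (cases "q > 0")
    case True
    have "q powr (s - 1) = q powr (\<nu> / 2 - 1) * exp (- (t * \<theta>2) * ln q)"
      using True by (simp add: s_def powr_def exp_add[symmetric] algebra_simps)
    moreover have "exp (- b * q) = exp (- q / 2) * exp (t * \<theta>3 * q)"
      by (simp add: b_def exp_add[symmetric] algebra_simps)
    moreover have "g q = exp (t * \<theta>1) * exp (- (t * \<theta>2) * ln q) * exp (t * \<theta>3 * q)"
      by (simp add: g_def exp_add[symmetric] exp_diff algebra_simps)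
    ultimately show ?thesis using True by (simp add: chi2_density_def C_def)
  next
    case False
    thus ?thesis by (cases "q = 0") (auto simp: chi2_density_def)
  qed
  have HB: "has_bochner_integral lborel (\<lambda>q. chi2_density \<nu> q * g q) (C * (Gamma s / b powr s))"
    unfolding pw by (intro has_bochner_integral_mult_right gamma_bochner s0 b0)
  have nn: "\<And>x. x \<in> space lborel \<Longrightarrow> 0 \<le> chi2_density \<nu> x" using chi2_nonneg[OF nu] by auto
  have "integrable lborel (\<lambda>q. chi2_density \<nu> q * g q)" using HB by (auto simp: has_bochner_integral_iff)
  with distributed_integrable[OF D gm nn]
  show "integrable M (\<lambda>\<omega>. exp (t * (\<theta>1 - \<theta>2 * ln (Q \<omega>) + \<theta>3 * Q \<omega>)))" by (simp add: g_def)
  have "(\<integral>\<omega>. exp (t * (\<theta>1 - \<theta>2 * ln (Q \<omega>) + \<theta>3 * Q \<omega>)) \<partial>M) = (\<integral>q. chi2_density \<nu> q * g q \<partial>lborel)"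
    using distributed_integral[OF D gm nn] by (simp add: g_def)
  also have "\<dots> = C * (Gamma s / b powr s)" using HB by (simp add: has_bochner_integral_iff)
  also have "\<dots> = exp (Kd \<nu> \<theta>1 \<theta>2 \<theta>3 0 t)"
  proof -
    have L: "1 - 2 * \<theta>3 * t > 0" by fact
    have e1: "exp (Kd \<nu> \<theta>1 \<theta>2 \<theta>3 0 t) = exp (t * \<theta>1) * exp (- (t * \<theta>2) * ln 2) * exp (ln_Gamma s) / exp (ln_Gamma (\<nu> / 2)) / exp (s * ln (1 - 2 * \<theta>3 * t))"
      by (simp add: Kd_def Lf_def s_def exp_add[symmetric] exp_diff[symmetric] algebra_simps)
    also have "\<dots> = exp (t * \<theta>1) * 2 powr (- (t * \<theta>2)) * Gamma s / Gamma (\<nu> / 2) / (1 - 2 * \<theta>3 * t) powr s"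
      using s0 nu L by (simp add: Gamma_real_pos_exp powr_def)
    finally have e1: "exp (Kd \<nu> \<theta>1 \<theta>2 \<theta>3 0 t) = \<dots>" .
    have bp: "b powr s = (1 - 2 * \<theta>3 * t) powr s / 2 powr s"
      using L by (simp add: b_def powr_divide[symmetric] algebra_simps diff_divide_distrib)
    have tp: "2 powr s = 2 powr (\<nu> / 2) * 2 powr (- (t * \<theta>2))" by (simp add: s_def powr_add[symmetric])
    show ?thesis unfolding e1 bp C_def tp using G0 L by (simp add: field_simps)
  qed
  finally show "(\<integral>\<omega>. exp (t * (\<theta>1 - \<theta>2 * ln (Q \<omega>) + \<theta>3 * Q \<omega>)) \<partial>M) = exp (Kd \<nu> \<theta>1 \<theta>2 \<theta>3 0 t)" .
qed


lemma deriv_seq: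
  fixes f :: "real \<Rightarrow> real"
  assumes "(f has_real_derivative D) (at t)" "d > 0"
  shows "(\<lambda>n. (f (t + d / (real n + 1)) - f t) / (d / (real n + 1))) \<longlonglongrightarrow> D"
proof -
  define h where "h = (\<lambda>n::nat. d / (real n + 1))"
  have hpos: "h n > 0" for n using assms by (simp add: h_def)
  have h0: "h \<longlonglongrightarrow> 0" unfolding h_def
    using tendsto_mult[OF tendsto_const[of d] LIMSEQ_inverse_real_of_nat] by (simp add: divide_inverse add.commute)
  have tl: "(\<lambda>n. t + h n) \<longlonglongrightarrow> t" using tendsto_add[OF tendsto_const h0, of t] by simp
  have seq: "filterlim (\<lambda>n. t + h n) (at t) sequentially"
    using tl hpos by (auto simp: filterlim_at intro!: always_eventually) (metis less_irrefl)
  have "((\<lambda>s. (f s - f t) / (s - t)) \<longlongrightarrow> D) (at t)"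
    using assms(1) by (simp add: has_field_derivative_iff)
  from filterlim_compose[OF this seq] show ?thesis by (simp add: h_def)
qed

lemma cum_formula:
  fixes m :: nat
  shows "Kd \<nu> \<theta>1 \<theta>2 \<theta>3 (Suc (Suc m)) 0 =
          2 ^ (Suc (Suc m) - 1) * Gamma (real (Suc (Suc m)) - 1) * \<theta>3 ^ (Suc (Suc m) - 1)
            * (- real (Suc (Suc m)) * \<theta>2 + (real (Suc (Suc m)) - 1) * \<nu> * \<theta>3)
          + (-1) ^ (Suc (Suc m)) * \<theta>2 ^ (Suc (Suc m)) * Polygamma (Suc (Suc m) - 1) (\<nu> / 2)"
proof -
  have g: "Gamma (real (Suc (Suc m)) - 1) = fact m"
    using Gamma_fact[of m] by (simp add: add.commute)
  show ?thesis unfolding g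
    by (simp add: Kd_def Lf_def power_minus[of \<theta>2] algebra_simps power_mult_distrib)
qed


theorem mainTheorem2:
  fixes M :: "'a measure" and Q :: "'a \<Rightarrow> real"
    and \<nu> \<theta>1 \<theta>2 \<theta>3 :: real
  assumes "prob_space M"
    and "\<nu> > 0"
    and "distributed M lborel Q (\<lambda>q. ennreal (chi2_density \<nu> q))"
    and "\<theta>2 > 0" and "\<theta>3 > 0"
  defines "Y \<equiv> (\<lambda>\<omega>. \<theta>1 - \<theta>2 * ln (Q \<omega>) + \<theta>3 * Q \<omega>)"
  defines "c \<equiv> min (\<nu> / \<theta>2) (1 / \<theta>3) / 2"
  shows "(\<forall>t < c. integrable M (\<lambda>\<omega>. exp (t * Y \<omega>)))
    \<and> (\<forall>j. \<forall>t < c. (deriv ^^ j) (cgf M Y) differentiable (at t))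
    \<and> cumulant M Y 1 = \<theta>1 - \<theta>2 * ln 2 + \<nu> * \<theta>3 - \<theta>2 * Digamma (\<nu> / 2)
    \<and> (\<forall>j \<ge> 2. cumulant M Y j =
          2 ^ (j - 1) * Gamma (real j - 1) * \<theta>3 ^ (j - 1)
            * (- real j * \<theta>2 + (real j - 1) * \<nu> * \<theta>3)
          + (-1) ^ j * \<theta>2 ^ j * Polygamma (j - 1) (\<nu> / 2))
    \<and> (\<integral>\<omega>. Y \<omega> \<partial>M) = cumulant M Y 1
    \<and> (\<integral>\<omega>. (Y \<omega> - (\<integral>\<omega>'. Y \<omega>' \<partial>M))\<^sup>2 \<partial>M) = cumulant M Y 2
    \<and> cumulant M Y 2 = 2 * \<theta>3 * (- 2 * \<theta>2 + \<nu> * \<theta>3) + \<theta>2\<^sup>2 * Polygamma 1 (\<nu> / 2)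
    \<and> cumulant M Y 3 = 4 * \<theta>3\<^sup>2 * (- 3 * \<theta>2 + 2 * \<nu> * \<theta>3) - \<theta>2 ^ 3 * Polygamma 2 (\<nu> / 2)
    \<and> cumulant M Y 4 = 16 * \<theta>3 ^ 3 * (- 4 * \<theta>2 + 3 * \<nu> * \<theta>3) + \<theta>2 ^ 4 * Polygamma 3 (\<nu> / 2)"
proof -
  interpret P: prob_space M by fact
  note D = assms(3)
  have nu: "\<nu> > 0" and th2: "\<theta>2 > 0" and th3: "\<theta>3 > 0" by fact+
  have Qm[measurable]: "Q \<in> borel_measurable M" using distributed_measurable[OF D] by simp
  have Ym[measurable]: "Y \<in> borel_measurable M" unfolding Y_def by measurable
  define K where "K = Kd \<nu> \<theta>1 \<theta>2 \<theta>3"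
  have c0: "c > 0" using nu th2 th3 by (simp add: c_def)
  have tc: "\<nu> / 2 - t * \<theta>2 > 0 \<and> 1 - 2 * \<theta>3 * t > 0" if "t < c" for t
  proof -
    have c1: "c \<le> \<nu> / \<theta>2 / 2" "c \<le> 1 / \<theta>3 / 2" by (auto simp: c_def)
    have a: "c * \<theta>2 \<le> \<nu> / 2" using c1(1) th2 by (simp add: field_simps)
    have b: "c * \<theta>3 \<le> 1 / 2" using c1(2) th3 by (simp add: field_simps)
    have "t * \<theta>2 < c * \<theta>2" "t * \<theta>3 < c * \<theta>3" using that th2 th3 by simp_all
    hence "t * \<theta>2 < \<nu> / 2" "t * \<theta>3 < 1 / 2" using a b by linarith+
    thus ?thesis by (auto simp: algebra_simps)
  qed
  have mgfY: "integrable M (\<lambda>\<omega>. exp (t * Y \<omega>)) \<and> (\<integral>\<omega>. exp (t * Y \<omega>) \<partial>M) = exp (K 0 t)" if "t < c" for t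
    using mgf_closed[OF D nu, of t \<theta>2 \<theta>3 \<theta>1] tc[OF that] by (simp add: Y_def K_def)
  have cgfK: "cgf M Y t = K 0 t" if "t < c" for t
    using mgfY[OF that] by (simp add: cgf_def mgf_def)
  have evc: "eventually (\<lambda>x. x < c) (nhds t)" if "t < c" for t
    using eventually_nhds_in_open[of "{..<c}" t] that by simp
  have Kder: "(K j has_real_derivative K (Suc j) t) (at t)" if "t < c" for j t
    unfolding K_def using tc[OF that] by (intro Kd_deriv) auto
  have main: "\<forall>t<c. (deriv ^^ j) (cgf M Y) t = K j t" for j
  proof (induction j)
    case 0 thus ?case using cgfK by simp
  next
    case (Suc j)
    show ?case
    proof (intro allI impI)
      fix t assume t: "t < c"
      have "(deriv ^^ Suc j) (cgf M Y) t = deriv ((deriv ^^ j) (cgf M Y)) t" by simp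
      also have "\<dots> = deriv (K j) t"
        by (rule deriv_cong_ev[OF eventually_mono[OF evc[OF t]]]) (use Suc in auto)
      also have "\<dots> = K (Suc j) t" by (rule DERIV_imp_deriv[OF Kder[OF t]])
      finally show "(deriv ^^ Suc j) (cgf M Y) t = K (Suc j) t" .
    qed
  qed
  have diff: "(deriv ^^ j) (cgf M Y) differentiable (at t)" if t: "t < c" for j t
  proof -
    have "((deriv ^^ j) (cgf M Y) has_real_derivative K (Suc j) t) (at t)"
    proof -
      have ev: "eventually (\<lambda>x. (deriv ^^ j) (cgf M Y) x = K j x) (nhds t)"
        using evc[OF t] main by (auto elim!: eventually_mono)
      show ?thesis using DERIV_cong_ev[OF refl ev refl] Kder[OF t] by simp
    qed
    thus ?thesis by (rule differentiableI[OF has_field_derivative_imp_has_derivative])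
  qed
  have cum: "cumulant M Y j = K j 0" for j using main c0 by (simp add: cumulant_def)
  have k1: "K 1 0 = \<theta>1 - \<theta>2 * ln 2 + \<nu> * \<theta>3 - \<theta>2 * Digamma (\<nu> / 2)"
    by (simp add: K_def Kd_def Lf_def)
  have kj: "\<forall>j \<ge> 2. K j 0 =
          2 ^ (j - 1) * Gamma (real j - 1) * \<theta>3 ^ (j - 1)
            * (- real j * \<theta>2 + (real j - 1) * \<nu> * \<theta>3)
          + (-1) ^ j * \<theta>2 ^ j * Polygamma (j - 1) (\<nu> / 2)"
  proof (intro allI impI)
    fix j :: nat assume "j \<ge> 2"
    then obtain m where "j = Suc (Suc m)" by (metis add_2_eq_Suc le_Suc_ex)
    thus "K j 0 = 2 ^ (j - 1) * Gamma (real j - 1) * \<theta>3 ^ (j - 1)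
            * (- real j * \<theta>2 + (real j - 1) * \<nu> * \<theta>3)
          + (-1) ^ j * \<theta>2 ^ j * Polygamma (j - 1) (\<nu> / 2)"
      unfolding K_def by (rule ssubst) (rule cum_formula)
  qed
  have G1: "Gamma (1::real) = 1" "Gamma (2::real) = 1" "Gamma (3::real) = 2"
    using Gamma_fact[of 0, where 'a=real] Gamma_fact[of 1, where 'a=real] Gamma_fact[of 2, where 'a=real]
    by (simp_all add: numeral_eq_Suc)
  have k2: "K 2 0 = 2 * \<theta>3 * (- 2 * \<theta>2 + \<nu> * \<theta>3) + \<theta>2\<^sup>2 * Polygamma 1 (\<nu> / 2)"
    using kj[rule_format, of 2] G1 by (simp add: power2_eq_square)
  have k3: "K 3 0 = 4 * \<theta>3\<^sup>2 * (- 3 * \<theta>2 + 2 * \<nu> * \<theta>3) - \<theta>2 ^ 3 * Polygamma 2 (\<nu> / 2)"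
    using kj[rule_format, of 3] G1 by (simp add: power2_eq_square)
  have k4: "K 4 0 = 16 * \<theta>3 ^ 3 * (- 4 * \<theta>2 + 3 * \<nu> * \<theta>3) + \<theta>2 ^ 4 * Polygamma 3 (\<nu> / 2)"
    using kj[rule_format, of 4] G1 by (simp add: mult_ac)
  define d where "d = c / 6"
  have d0: "d > 0" using c0 by (simp add: d_def)
  have intc: "integrable M (\<lambda>\<omega>. exp (t * Y \<omega>))" if "t < c" for t using mgfY[OF that] by simp
  have K00: "K 0 0 = 0" by (simp add: K_def Kd_def Lf_def)
  define F1 where "F1 = (\<lambda>s. K 1 s * exp (K 0 s))"
  have F0d: "((\<lambda>s. exp (K 0 s)) has_real_derivative F1 s) (at s)" if "s < c" for s
    unfolding F1_def using Kder[OF that, of 0] by (auto intro!: derivative_eq_intros)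
  have F1d: "(F1 has_real_derivative (K 2 s * exp (K 0 s) + K 1 s * (K 1 s * exp (K 0 s)))) (at s)" if "s < c" for s
    unfolding F1_def using Kder[OF that, of 0] Kder[OF that, of 1]
    by (auto intro!: derivative_eq_intros simp: numeral_2_eq_2)
  have stepA: "(\<integral>\<omega>. Y \<omega> ^ Suc 0 * exp (s * Y \<omega>) \<partial>M) = F1 s" if s: "0 \<le> s" "s \<le> d" for s
  proof -
    have sc: "s < c" "s + 3 * d < c" "s - 3 * d < c" using s c0 by (auto simp: d_def)
    have hc: "s + d / (real n + 1) < c" for n
    proof -
      have "d / (real n + 1) \<le> d" using d0 by (simp add: field_simps)
      moreover have "s + d + d < c" using s c0 by (simp add: d_def)
      ultimately show ?thesis using d0 by linarith
    qed
    note L = dq_lim[OF Ym d0 _ intc[OF sc(2)] intc[OF sc(3)], of 0]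
    hence "(\<lambda>n. ((\<integral>\<omega>. exp ((s + d / (real n + 1)) * Y \<omega>) \<partial>M) - (\<integral>\<omega>. exp (s * Y \<omega>) \<partial>M)) / (d / (real n + 1)))
        \<longlonglongrightarrow> (\<integral>\<omega>. Y \<omega> ^ Suc 0 * exp (s * Y \<omega>) \<partial>M)" by simp
    hence "(\<lambda>n. (exp (K 0 (s + d / (real n + 1))) - exp (K 0 s)) / (d / (real n + 1)))
        \<longlonglongrightarrow> (\<integral>\<omega>. Y \<omega> ^ Suc 0 * exp (s * Y \<omega>) \<partial>M)"
      using mgfY[OF hc] mgfY[OF sc(1)] by simp
    moreover have "(\<lambda>n. (exp (K 0 (s + d / (real n + 1))) - exp (K 0 s)) / (d / (real n + 1))) \<longlonglongrightarrow> F1 s"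
      by (rule deriv_seq[OF F0d[OF sc(1)] d0])
    ultimately show ?thesis by (rule LIMSEQ_unique)
  qed
  have EY: "(\<integral>\<omega>. Y \<omega> \<partial>M) = K 1 0"
    using stepA[of 0] d0 K00 by (simp add: F1_def)
  have EY2: "(\<integral>\<omega>. (Y \<omega>)\<^sup>2 \<partial>M) = K 2 0 + (K 1 0)\<^sup>2"
  proof -
    have sc: "0 + 3 * d < c" "0 - 3 * d < c" using c0 by (auto simp: d_def)
    have hd: "0 \<le> 0 + d / (real n + 1)" "0 + d / (real n + 1) \<le> d" for n
      using d0 by (auto simp: field_simps)
    note L = dq_lim[OF Ym d0 _ intc[OF sc(1)] intc[OF sc(2)], of "Suc 0"]
    hence "(\<lambda>n. (F1 (0 + d / (real n + 1)) - F1 0) / (d / (real n + 1)))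
        \<longlonglongrightarrow> (\<integral>\<omega>. Y \<omega> ^ Suc (Suc 0) * exp (0 * Y \<omega>) \<partial>M)"
      using stepA[OF hd] stepA[of 0] d0 by simp
    moreover have "(\<lambda>n. (F1 (0 + d / (real n + 1)) - F1 0) / (d / (real n + 1))) \<longlonglongrightarrow>
        K 2 0 * exp (K 0 0) + K 1 0 * (K 1 0 * exp (K 0 0))"
      by (rule deriv_seq[OF F1d d0]) (use c0 in simp)
    ultimately have "(\<integral>\<omega>. Y \<omega> ^ Suc (Suc 0) * exp (0 * Y \<omega>) \<partial>M) = K 2 0 * exp (K 0 0) + K 1 0 * (K 1 0 * exp (K 0 0))"
      by (rule LIMSEQ_unique)
    thus ?thesis using K00 by (simp add: power2_eq_square)
  qed
  have iY: "integrable M Y" and iY2: "integrable M (\<lambda>\<omega>. (Y \<omega>)\<^sup>2)"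
  proof -
    have a: "0 + 3 * d < c" "0 - 3 * d < c" using c0 by (auto simp: d_def)
    show "integrable M Y"
      using integ_pow_exp[OF Ym d0 _ _ intc[OF a(1)] intc[OF a(2)], of 1 0] d0 by simp
    show "integrable M (\<lambda>\<omega>. (Y \<omega>)\<^sup>2)"
      using integ_pow_exp[OF Ym d0 _ _ intc[OF a(1)] intc[OF a(2)], of 2 0] d0 by simp
  qed
  have VY: "(\<integral>\<omega>. (Y \<omega> - (\<integral>\<omega>'. Y \<omega>' \<partial>M))\<^sup>2 \<partial>M) = K 2 0"
    using P.variance_eq[OF iY iY2] EY EY2 by simp
  show ?thesis
    using intc diff cum k1 kj EY VY k2 k3 k4 by auto
qed

end
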